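(* Assume the cost function $\mathbf{c}$ satisfies the Principle of Near-Optimality (PONO). Let $Q$ be a finite nonempty set of tables, let $\alpha_i\ge 1$, and run the Representative-Tradeoffs dynamic program (RTA) with internal precision $\alpha_i$, producing sets $\mathcal{P}^q\subseteq \mathcal{A}(q)$ for all nonempty $q\subseteq Q$ (the order in which splits, operators and sub-plans are enumerated is arbitrary). Then for every nonempty $q\subseteq Q$ and every plan $p^*\in\mathcal{A}(q)$ there exists $p\in\mathcal{P}^q$ with $\mathbf{c}(p)\preceq_{\alpha_i^{|q|}}\mathbf{c}(p^* )$. In particular $\mathcal{P}^Q$ is an $\alpha_i^{|Q|}$-approximate Pareto set for $Q$.
   Context: Fix a finite set $\mathbb{O}$ of $l\ge1$ objectives and a finite set $\mathbb{J}$ of join operators. For each table $t$ there is a finite nonempty set $\mathcal{A}(\{t\})$ of scan plans (access paths). For a set $q$ of tables with $|q|\ge2$, the plan space $\mathcal{A}(q)$ consists of all plans $\mathrm{Combine}(j,p_1,p_2)$ where $q=q_1\dot\cup q_2$ with $q_1,q_2$ nonempty, $j\in\mathbb{J}$, $p_1\in\mathcal{A}(q_1)$, $p_2\in\mathcal{A}(q_2)$; $p_1,p_2$ are the sub-plans. Each plan $p$ has a cost vector $\mathbf{c}(p)\in\mathbb{R}_{\ge0}^{\mathbb{O}}$. For vectors, $\mathbf{c}_1\preceq\mathbf{c}_2$ means $\mathbf{c}_1^o\le\mathbf{c}_2^o$ for all $o\in\mathbb{O}$, and $\mathbf{c}_1\preceq_\alpha\mathbf{c}_2$ means $\mathbf{c}_1^o\le\alpha\,\mathbf{c}_2^o$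 for all $o$. PONO: for all $\alpha\ge1$, $j\in\mathbb{J}$ and plans with $\mathbf{c}(p_L^* )\preceq_\alpha\mathbf{c}(p_L)$, $\mathbf{c}(p_R^* )\preceq_\alpha\mathbf{c}(p_R)$ (where $p_L,p_L^*$ produce the same table set, as do $p_R,p_R^*$), one has $\mathbf{c}(\mathrm{Combine}(j,p_L^*,p_R^* ))\preceq_\alpha\mathbf{c}(\mathrm{Combine}(j,p_L,p_R))$. Procedure $\mathrm{Prune}(\mathcal{P},p_N,\alpha_i)$: if there is no $p\in\mathcal{P}$ with $\mathbf{c}(p)\preceq_{\alpha_i}\mathbf{c}(p_N)$, then delete from $\mathcal{P}$ every $p$ with $\mathbf{c}(p_N)\preceq\mathbf{c}(p)$ and then insert $p_N$; otherwise $\mathcal{P}$ is unchanged. RTA: for each table $t\in Q$, start with $\mathcal{P}^{\{t\}}=\emptyset$ and call $\mathrm{Prune}(\mathcal{P}^{\{t\}},p_N,\alpha_i)$ for every $p_N\in\mathcal{A}(\{t\})$; then for $k=2,\dots,|Q|$ and every $q\subseteq Q$ with $|q|=k$, start with $\mathcal{P}^q=\emptyset$ and, for every split $q=q_1\dot\cup q_2$ into nonempty parts, every $p_1\in\mathcal{P}^{q_1}$, $p_2\in\mathcal{P}^{q_2}$, $j\in\mathbb{J}$, call $\mathrm{Prune}(\mathcal{P}^q,\mathrm{Combine}(j,p_1,p_2),\alpha_i)$. An $\alpha$-approximate Pareto set for $q$ is a set of plans for $q$ containing, for every plan $p^*\in\mathcal{A}(q)$ (equivalently every Pareto-optimal one),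 a plan $p$ with $\mathbf{c}(p)\preceq_\alpha\mathbf{c}(p^* )$. *)

theory Defs
  imports Complex_Main
begin

text \<open>Cost vectors are functions from objectives to reals; only the
objectives in the (finite) objective set Obj matter.\<close>

definition approx_le :: "'o set \<Rightarrow> real \<Rightarrow> ('o \<Rightarrow> real) \<Rightarrow> ('o \<Rightarrow> real) \<Rightarrow> bool" where
  "approx_le Obj \<alpha> c1 c2 \<longleftrightarrow> (\<forall>ob\<in>Obj. c1 ob \<le> \<alpha> * c2 ob)"

definition dom_le :: "'o set \<Rightarrow> ('o \<Rightarrow> real) \<Rightarrow> ('o \<Rightarrow> real) \<Rightarrow> bool" where
  "dom_le Obj c1 c2 \<longleftrightarrow> (\<forall>ob\<in>Obj. c1 ob \<le> c2 ob)"

inductive is_plan :: "('a \<Rightarrow> 'p set) \<Rightarrow> 'j set \<Rightarrow> ('j \<Rightarrow> 'p \<Rightarrow> 'p \<Rightarrow> 'p)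
    \<Rightarrow> 'a set \<Rightarrow> 'p \<Rightarrow> bool"
  for Scan :: "'a \<Rightarrow> 'p set" and J :: "'j set" and Combine :: "'j \<Rightarrow> 'p \<Rightarrow> 'p \<Rightarrow> 'p"
  where
    scan: "p \<in> Scan t \<Longrightarrow> is_plan Scan J Combine {t} p"
  | combine: "\<lbrakk> q1 \<noteq> {}; q2 \<noteq> {}; q1 \<inter> q2 = {}; j \<in> J;
               is_plan Scan J Combine q1 p1; is_plan Scan J Combine q2 p2 \<rbrakk>
              \<Longrightarrow> is_plan Scan J Combine (q1 \<union> q2) (Combine j p1 p2)"

definition plans :: "('a \<Rightarrow> 'p set) \<Rightarrow> 'j set \<Rightarrow> ('j \<Rightarrow> 'p \<Rightarrow> 'p \<Rightarrow> 'p) \<Rightarrow> 'a set \<Rightarrow> 'p set" where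
  "plans Scan J Combine q = {p. is_plan Scan J Combine q p}"

definition PONO :: "('a \<Rightarrow> 'p set) \<Rightarrow> 'j set \<Rightarrow> ('j \<Rightarrow> 'p \<Rightarrow> 'p \<Rightarrow> 'p)
    \<Rightarrow> 'o set \<Rightarrow> ('p \<Rightarrow> 'o \<Rightarrow> real) \<Rightarrow> bool" where
  "PONO Scan J Combine Obj c \<longleftrightarrow>
    (\<forall>\<alpha> j qL qR pL pLs pR pRs. \<alpha> \<ge> 1 \<longrightarrow> j \<in> J \<longrightarrow>
       pL \<in> plans Scan J Combine qL \<longrightarrow> pLs \<in> plans Scan J Combine qL \<longrightarrow>
       pR \<in> plans Scan J Combine qR \<longrightarrow> pRs \<in> plans Scan J Combine qR \<longrightarrow>
       approx_le Obj \<alpha> (c pLs) (c pL) \<longrightarrow> approx_le Obj \<alpha> (c pRs) (c pR) \<longrightarrow>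
       approx_le Obj \<alpha> (c (Combine j pLs pRs)) (c (Combine j pL pR)))"

definition prune :: "'o set \<Rightarrow> ('p \<Rightarrow> 'o \<Rightarrow> real) \<Rightarrow> real \<Rightarrow> 'p set \<Rightarrow> 'p \<Rightarrow> 'p set" where
  "prune Obj c \<alpha> P pN =
     (if \<exists>p\<in>P. approx_le Obj \<alpha> (c p) (c pN) then P
      else insert pN (P - {p\<in>P. dom_le Obj (c pN) (c p)}))"

definition rta_candidates :: "'j set \<Rightarrow> ('a set \<Rightarrow> 'p set) \<Rightarrow> 'a set
    \<Rightarrow> ('a set \<times> 'a set \<times> 'j \<times> 'p \<times> 'p) set" where
  "rta_candidates J P q = {(q1, q2, j, p1, p2). q1 \<noteq> {} \<and> q2 \<noteq> {} \<and> q1 \<inter> q2 = {} \<and>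
      q1 \<union> q2 = q \<and> j \<in> J \<and> p1 \<in> P q1 \<and> p2 \<in> P q2}"

text \<open>P is a possible result of running RTA with precision \<alpha> on Q, for some
(arbitrary) enumeration order of the Prune calls.\<close>

definition rta_run :: "('a \<Rightarrow> 'p set) \<Rightarrow> 'j set \<Rightarrow> ('j \<Rightarrow> 'p \<Rightarrow> 'p \<Rightarrow> 'p)
    \<Rightarrow> 'o set \<Rightarrow> ('p \<Rightarrow> 'o \<Rightarrow> real) \<Rightarrow> real \<Rightarrow> 'a set \<Rightarrow> ('a set \<Rightarrow> 'p set) \<Rightarrow> bool" where
  "rta_run Scan J Combine Obj c \<alpha> Q P \<longleftrightarrow>
    (\<forall>t\<in>Q. \<exists>L. distinct L \<and> set L = Scan t \<and>
        P {t} = foldl (prune Obj c \<alpha>) {} L) \<and>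
    (\<forall>q. q \<subseteq> Q \<and> card q \<ge> 2 \<longrightarrow>
      (\<exists>L. distinct L \<and> set L = rta_candidates J P q \<and>
        P q = foldl (\<lambda>S (q1, q2, j, p1, p2). prune Obj c \<alpha> S (Combine j p1 p2)) {} L))"

definition approx_pareto_set :: "('a \<Rightarrow> 'p set) \<Rightarrow> 'j set \<Rightarrow> ('j \<Rightarrow> 'p \<Rightarrow> 'p \<Rightarrow> 'p)
    \<Rightarrow> 'o set \<Rightarrow> ('p \<Rightarrow> 'o \<Rightarrow> real) \<Rightarrow> real \<Rightarrow> 'a set \<Rightarrow> 'p set \<Rightarrow> bool" where
  "approx_pareto_set Scan J Combine Obj c \<alpha> q S \<longleftrightarrow>
    S \<subseteq> plans Scan J Combine q \<and>
    (\<forall>ps\<in>plans Scan J Combine q. \<exists>p\<in>S. approx_le Obj \<alpha> (c p) (c ps))"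

end

theory Submission
  imports Defs
begin

lemma prune_sub: "prune Obj c \<alpha> S pN \<subseteq> insert pN S"
  by (auto simp: prune_def)

lemma prune_new:
  assumes "\<alpha> \<ge> 1" "\<forall>ob\<in>Obj. c pN ob \<ge> 0"
  shows "\<exists>p\<in>prune Obj c \<alpha> S pN. approx_le Obj \<alpha> (c p) (c pN)"
proof (cases "\<exists>p\<in>S. approx_le Obj \<alpha> (c p) (c pN)")
  case True thus ?thesis by (auto simp: prune_def)
next
  case False
  have "approx_le Obj \<alpha> (c pN) (c pN)"
    using assms unfolding approx_le_def
    by (metis mult_le_cancel_right1 order.strict_iff_not)
  with False show ?thesis by (auto simp: prune_def)
qed

lemma prune_keep:
  assumes "\<exists>p\<in>S. approx_le Obj \<beta> (c p) x"
  shows "\<exists>p\<in>prune Obj c \<alpha> S pN. approx_le Obj \<beta> (c p) x"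
proof (cases "\<exists>p\<in>S. approx_le Obj \<alpha> (c p) (c pN)")
  case True thus ?thesis using assms by (auto simp: prune_def)
next
  case False
  from assms obtain p where p: "p \<in> S" "approx_le Obj \<beta> (c p) x" by blast
  show ?thesis
  proof (cases "dom_le Obj (c pN) (c p)")
    case True
    hence "approx_le Obj \<beta> (c pN) x" using p(2)
      unfolding approx_le_def dom_le_def by (meson order_trans)
    thus ?thesis using False by (auto simp: prune_def)
  next
    case False2: False
    thus ?thesis using False p by (auto simp: prune_def)
  qed
qed

lemma fold_sub:
  "foldl (\<lambda>S x. prune Obj c \<alpha> S (f x)) S L \<subseteq> S \<union> f ` set L"
proof (induction L arbitrary: S)
  case Nil then show ?case by simp
next
  case (Cons a L)
  have "foldl (\<lambda>S x. prune Obj c \<alpha> S (f x)) S (a # L)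
      = foldl (\<lambda>S x. prune Obj c \<alpha> S (f x)) (prune Obj c \<alpha> S (f a)) L" by simp
  also have "\<dots> \<subseteq> prune Obj c \<alpha> S (f a) \<union> f ` set L" by (rule Cons.IH)
  also have "\<dots> \<subseteq> S \<union> f ` set (a # L)" using prune_sub[of Obj c \<alpha> S "f a"] by auto
  finally show ?case .
qed

lemma fold_cover:
  assumes "\<alpha> \<ge> 1" "\<forall>x\<in>set L. \<forall>ob\<in>Obj. c (f x) ob \<ge> 0"
    and "\<forall>z\<in>Z. \<exists>p\<in>S. approx_le Obj \<alpha> (c p) (c z)"
  shows "\<forall>z\<in>Z \<union> f ` set L. \<exists>p\<in>foldl (\<lambda>S x. prune Obj c \<alpha> S (f x)) S L. approx_le Obj \<alpha> (c p) (c z)"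
  using assms(2,3)
proof (induction L arbitrary: S Z)
  case Nil then show ?case by simp
next
  case (Cons a L)
  have "\<forall>z\<in>insert (f a) Z. \<exists>p\<in>prune Obj c \<alpha> S (f a). approx_le Obj \<alpha> (c p) (c z)"
    using prune_new[OF assms(1), of Obj c "f a" S] prune_keep[of S Obj \<alpha> c] Cons.prems by auto
  from Cons.IH[OF _ this] Cons.prems(1) show ?case by auto
qed

lemma case_eq:
  "(\<lambda>S (q1, q2, j, p1, p2). prune Obj c \<alpha> S (Combine j p1 p2))
   = (\<lambda>S x. prune Obj c \<alpha> S ((\<lambda>(q1, q2, j, p1, p2). Combine j p1 p2) x))"
  by (auto simp: fun_eq_iff split: prod.splits)

lemma scan_eq: "foldl (prune Obj c \<alpha>) S L = foldl (\<lambda>S x. prune Obj c \<alpha> S (id x)) S L"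
  by simp


lemma card_split:
  assumes "finite q" "q1 \<union> q2 = q" "q1 \<inter> q2 = {}" "q2 \<noteq> {}"
  shows "card q1 < card q"
proof -
  have "q1 \<subset> q" using assms by blast
  thus ?thesis using assms(1) by (simp add: psubset_card_mono)
qed

lemma sub_plans:
  assumes run: "rta_run Scan J Combine Obj c \<alpha> Q P" and fQ: "finite Q"
  shows "q \<subseteq> Q \<Longrightarrow> q \<noteq> {} \<Longrightarrow> P q \<subseteq> plans Scan J Combine q"
proof (induction "card q" arbitrary: q rule: less_induct)
  case less
  have fq: "finite q" using less.prems fQ finite_subset by blast
  have "card q \<ge> 1" using fq less.prems by (simp add: Suc_leI card_gt_0_iff)
  then consider "card q = 1" | "card q \<ge> 2" by linarith
  then show ?case
  proof cases
    case 1
    then obtain t where q: "q = {t}" using card_1_singletonE by blast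
    with less.prems have "t \<in> Q" by auto
    with run obtain L where L: "set L = Scan t" "P {t} = foldl (prune Obj c \<alpha>) {} L"
      unfolding rta_run_def by blast
    have "P {t} \<subseteq> {} \<union> id ` set L"
      unfolding L(2) scan_eq by (rule fold_sub)
    also have "\<dots> \<subseteq> plans Scan J Combine {t}" using L(1)
      by (auto simp: plans_def intro: is_plan.scan)
    finally show ?thesis using q by simp
  next
    case 2
    with run less.prems obtain L where L: "set L = rta_candidates J P q"
      "P q = foldl (\<lambda>S (q1, q2, j, p1, p2). prune Obj c \<alpha> S (Combine j p1 p2)) {} L"
      unfolding rta_run_def by blast
    have "P q \<subseteq> {} \<union> (\<lambda>(q1, q2, j, p1, p2). Combine j p1 p2) ` set L"
      unfolding L(2) case_eq by (rule fold_sub)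
    also have "\<dots> \<subseteq> plans Scan J Combine q"
    proof
      fix x assume "x \<in> {} \<union> (\<lambda>(q1, q2, j, p1, p2). Combine j p1 p2) ` set L"
      then obtain y where y: "y \<in> set L" "x = (\<lambda>(q1, q2, j, p1, p2). Combine j p1 p2) y" by blast
      obtain q1 q2 j p1 p2 where yy: "y = (q1, q2, j, p1, p2)" by (cases y) blast
      have x: "x = Combine j p1 p2" using y yy by simp
      have cand: "q1 \<noteq> {}" "q2 \<noteq> {}" "q1 \<inter> q2 = {}" "q1 \<union> q2 = q" "j \<in> J" "p1 \<in> P q1" "p2 \<in> P q2"
        using y(1) yy L(1) unfolding rta_candidates_def by auto
      have c1: "card q1 < card q" using card_split[OF fq cand(4) cand(3) cand(2)] .
      have c2: "card q2 < card q" using card_split[OF fq _ _ cand(1), of q2] cand(3,4) by blast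
      have "p1 \<in> plans Scan J Combine q1" using less.hyps[OF c1] cand less.prems by blast
      moreover have "p2 \<in> plans Scan J Combine q2" using less.hyps[OF c2] cand less.prems by blast
      ultimately show "x \<in> plans Scan J Combine q" using cand x
        by (auto simp: plans_def intro: is_plan.combine)
    qed
    finally show ?thesis .
  qed
qed

lemma is_plan_card1:
  assumes "is_plan Scan J Combine q p" "finite q" "card q = 1"
  shows "\<exists>t. q = {t} \<and> p \<in> Scan t"
  using assms(1)
proof cases
  case (scan t) thus ?thesis by auto
next
  case (combine q1 q2 j p1 p2)
  have "card q1 < card q" using card_split[OF assms(2)] combine by blast
  moreover have "card q1 > 0" using combine assms(2) by (simp add: card_gt_0_iff)
  ultimately show ?thesis using assms(3) by simp
qed

lemma is_plan_card2:
  assumes "is_plan Scan J Combine q p" "card q \<ge> 2"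
  shows "\<exists>q1 q2 j p1 p2. p = Combine j p1 p2 \<and> q1 \<noteq> {} \<and> q2 \<noteq> {} \<and> q1 \<inter> q2 = {} \<and>
           q1 \<union> q2 = q \<and> j \<in> J \<and> is_plan Scan J Combine q1 p1 \<and> is_plan Scan J Combine q2 p2"
  using assms(1)
proof cases
  case (scan t) thus ?thesis using assms(2) by auto
next
  case (combine q1 q2 j p1 p2) thus ?thesis by blast
qed

lemma approx_mono:
  assumes "approx_le Obj a x y" "a \<le> b" "\<forall>ob\<in>Obj. y ob \<ge> 0"
  shows "approx_le Obj b x y"
  using assms unfolding approx_le_def by (meson mult_right_mono order_trans)

lemma approx_trans:
  assumes "approx_le Obj a x y" "approx_le Obj b y z" "a \<ge> 0"
  shows "approx_le Obj (a * b) x z"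
  unfolding approx_le_def
proof
  fix ob assume ob: "ob \<in> Obj"
  have "x ob \<le> a * y ob" using assms(1) ob unfolding approx_le_def by blast
  also have "\<dots> \<le> a * (b * z ob)"
    using assms(2) ob assms(3) unfolding approx_le_def by (simp add: mult_left_mono)
  finally show "x ob \<le> a * b * z ob" by (simp add: mult.assoc)
qed

lemma cover:
  assumes run: "rta_run Scan J Combine Obj c \<alpha> Q P" and fQ: "finite Q" and a1: "\<alpha> \<ge> 1"
    and nn: "\<And>q p ob. p \<in> plans Scan J Combine q \<Longrightarrow> ob \<in> Obj \<Longrightarrow> c p ob \<ge> 0"
    and pono: "PONO Scan J Combine Obj c"
  shows "q \<subseteq> Q \<Longrightarrow> q \<noteq> {} \<Longrightarrow> \<forall>ps\<in>plans Scan J Combine q. \<exists>p\<in>P q. approx_le Obj (\<alpha> ^ card q) (c p) (c ps)"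
proof (induction "card q" arbitrary: q rule: less_induct)
  case less
  have fq: "finite q" using less.prems fQ finite_subset by blast
  have "card q \<ge> 1" using fq less.prems by (simp add: Suc_leI card_gt_0_iff)
  then consider "card q = 1" | "card q \<ge> 2" by linarith
  then show ?case
  proof cases
    case 1
    show ?thesis
    proof
      fix ps assume ps: "ps \<in> plans Scan J Combine q"
      hence "is_plan Scan J Combine q ps" by (simp add: plans_def)
      from is_plan_card1[OF this fq 1] obtain t where q: "q = {t}" and pst: "ps \<in> Scan t"
        by blast
      with less.prems have "t \<in> Q" by auto
      with run obtain L where L: "set L = Scan t" "P {t} = foldl (prune Obj c \<alpha>) {} L"
        unfolding rta_run_def by blast
      have nnL: "\<forall>x\<in>set L. \<forall>ob\<in>Obj. c (id x) ob \<ge> 0"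
      proof (intro ballI)
        fix x ob assume x: "x \<in> set L" and ob: "ob \<in> Obj"
        have "x \<in> plans Scan J Combine {t}" using x L(1) by (auto simp: plans_def intro: is_plan.scan)
        thus "c (id x) ob \<ge> 0" using nn[OF _ ob] by simp
      qed
      have "\<forall>z\<in>{} \<union> id ` set L. \<exists>p\<in>P {t}. approx_le Obj \<alpha> (c p) (c z)"
        unfolding L(2) scan_eq by (rule fold_cover[where f=id and c=c and Obj=Obj, OF a1 nnL]) simp
      then show "\<exists>p\<in>P q. approx_le Obj (\<alpha> ^ card q) (c p) (c ps)"
        using pst L(1) q by auto
    qed
  next
    case 2
    with run less.prems obtain L where L: "set L = rta_candidates J P q"
      "P q = foldl (\<lambda>S (q1, q2, j, p1, p2). prune Obj c \<alpha> S (Combine j p1 p2)) {} L"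
      unfolding rta_run_def by blast
    define cf where "cf = (\<lambda>(q1::'a set, q2::'a set, j, p1, p2). Combine j p1 p2)"
    have nnL: "\<forall>x\<in>set L. \<forall>ob\<in>Obj. c (cf x) ob \<ge> 0"
    proof (intro ballI)
      fix x ob assume x: "x \<in> set L" and ob: "ob \<in> Obj"
      obtain q1 q2 j p1 p2 where yy: "x = (q1, q2, j, p1, p2)" by (cases x) blast
      have cand: "q1 \<noteq> {}" "q2 \<noteq> {}" "q1 \<inter> q2 = {}" "q1 \<union> q2 = q" "j \<in> J" "p1 \<in> P q1" "p2 \<in> P q2"
        using x yy L(1) unfolding rta_candidates_def by auto
      have "p1 \<in> plans Scan J Combine q1" using sub_plans[OF run fQ] cand less.prems by blast
      moreover have "p2 \<in> plans Scan J Combine q2" using sub_plans[OF run fQ] cand less.prems by blast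
      ultimately have "cf x \<in> plans Scan J Combine q" using cand yy
        by (auto simp: plans_def cf_def intro: is_plan.combine)
      thus "c (cf x) ob \<ge> 0" using nn ob by blast
    qed
    have cov: "\<forall>z\<in>{} \<union> cf ` set L. \<exists>p\<in>P q. approx_le Obj \<alpha> (c p) (c z)"
      unfolding L(2) case_eq cf_def[symmetric] by (rule fold_cover[where f=cf and c=c and Obj=Obj, OF a1 nnL]) simp
    show ?thesis
    proof
      fix ps assume ps: "ps \<in> plans Scan J Combine q"
      hence "is_plan Scan J Combine q ps" by (simp add: plans_def)
      from is_plan_card2[OF this 2] obtain q1 q2 j p1 p2 where pp: "ps = Combine j p1 p2" "q1 \<noteq> {}" "q2 \<noteq> {}" "q1 \<inter> q2 = {}"
           "q1 \<union> q2 = q" "j \<in> J" "is_plan Scan J Combine q1 p1" "is_plan Scan J Combine q2 p2"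
        by blast
      have pl1: "p1 \<in> plans Scan J Combine q1" and pl2: "p2 \<in> plans Scan J Combine q2"
        using pp(7,8) by (simp_all add: plans_def)
      have c1: "card q1 < card q" using card_split[OF fq pp(5) pp(4) pp(3)] .
      have c2: "card q2 < card q" using card_split[OF fq _ _ pp(2), of q2] pp(4,5) by blast
      have s1: "q1 \<subseteq> Q" "q2 \<subseteq> Q" using pp less.prems by auto
      obtain p1' where p1': "p1' \<in> P q1" "approx_le Obj (\<alpha> ^ card q1) (c p1') (c p1)"
        using less.hyps[OF c1 s1(1) pp(2)] pl1 by blast
      obtain p2' where p2': "p2' \<in> P q2" "approx_le Obj (\<alpha> ^ card q2) (c p2') (c p2)"
        using less.hyps[OF c2 s1(2) pp(3)] pl2 by blast
      define \<beta> where "\<beta> = \<alpha> ^ (card q - 1)"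
      have b1: "\<beta> \<ge> 1" unfolding \<beta>_def using a1 by simp
      have le1: "\<alpha> ^ card q1 \<le> \<beta>" unfolding \<beta>_def using a1 c1 by (intro power_increasing) auto
      have a1': "approx_le Obj \<beta> (c p1') (c p1)"
        by (rule approx_mono[OF p1'(2) le1]) (use nn[OF pl1] in blast)
      have le2: "\<alpha> ^ card q2 \<le> \<beta>" unfolding \<beta>_def using a1 c2 by (intro power_increasing) auto
      have a2': "approx_le Obj \<beta> (c p2') (c p2)"
        by (rule approx_mono[OF p2'(2) le2]) (use nn[OF pl2] in blast)
      have m1: "p1' \<in> plans Scan J Combine q1" using sub_plans[OF run fQ] p1'(1) s1 pp by blast
      have m2: "p2' \<in> plans Scan J Combine q2" using sub_plans[OF run fQ] p2'(1) s1 pp by blast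
      have comb: "approx_le Obj \<beta> (c (Combine j p1' p2')) (c ps)"
        unfolding pp(1)
        by (rule pono[unfolded PONO_def, rule_format, where \<alpha>=\<beta> and j=j and qL=q1 and qR=q2 and pL=p1 and pLs=p1' and pR=p2 and pRs=p2'])
           (use b1 pp(6) pl1 pl2 m1 m2 a1' a2' in \<open>auto\<close>)
      have "(q1, q2, j, p1', p2') \<in> set L" using L(1) pp p1' p2'
        unfolding rta_candidates_def by auto
      then obtain p where p: "p \<in> P q" "approx_le Obj \<alpha> (c p) (c (Combine j p1' p2'))"
      proof -
        have "Combine j p1' p2' \<in> {} \<union> cf ` set L" using \<open>(q1, q2, j, p1', p2') \<in> set L\<close>
          unfolding cf_def by force
        thus ?thesis using cov that by blast
      qed
      have "approx_le Obj (\<alpha> * \<beta>) (c p) (c ps)"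
        using approx_trans[OF p(2) comb] a1 by simp
      moreover have "\<alpha> * \<beta> = \<alpha> ^ card q"
      proof -
        have "card q = Suc (card q - 1)" using 2 by simp
        hence "\<alpha> ^ card q = \<alpha> ^ Suc (card q - 1)" by (rule arg_cong)
        thus ?thesis unfolding \<beta>_def by simp
      qed
      ultimately show "\<exists>p\<in>P q. approx_le Obj (\<alpha> ^ card q) (c p) (c ps)" using p(1) by auto
    qed
  qed
qed

theorem theorem3:
  fixes Scan :: "'a \<Rightarrow> 'p set" and J :: "'j set" and Combine :: "'j \<Rightarrow> 'p \<Rightarrow> 'p \<Rightarrow> 'p"
    and Obj :: "'o set" and c :: "'p \<Rightarrow> 'o \<Rightarrow> real"
    and Q :: "'a set" and \<alpha> :: real and P :: "'a set \<Rightarrow> 'p set"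
  assumes "finite Obj" and "Obj \<noteq> {}" and "finite J"
    and "\<And>t. finite (Scan t)" and "\<And>t. Scan t \<noteq> {}"
    and "\<And>q p ob. p \<in> plans Scan J Combine q \<Longrightarrow> ob \<in> Obj \<Longrightarrow> c p ob \<ge> 0"
    and "PONO Scan J Combine Obj c"
    and "finite Q" and "Q \<noteq> {}" and "\<alpha> \<ge> 1"
    and "rta_run Scan J Combine Obj c \<alpha> Q P"
  shows "(\<forall>q. q \<subseteq> Q \<and> q \<noteq> {} \<longrightarrow>
            (\<forall>ps\<in>plans Scan J Combine q. \<exists>p\<in>P q. approx_le Obj (\<alpha> ^ card q) (c p) (c ps)))
       \<and> approx_pareto_set Scan J Combine Obj c (\<alpha> ^ card Q) Q (P Q)"
proof -
  have A: "\<forall>q. q \<subseteq> Q \<and> q \<noteq> {} \<longrightarrow>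
            (\<forall>ps\<in>plans Scan J Combine q. \<exists>p\<in>P q. approx_le Obj (\<alpha> ^ card q) (c p) (c ps))"
  proof (intro allI impI)
    fix q assume q: "q \<subseteq> Q \<and> q \<noteq> {}"
    show "\<forall>ps\<in>plans Scan J Combine q. \<exists>p\<in>P q. approx_le Obj (\<alpha> ^ card q) (c p) (c ps)"
      by (rule cover[OF assms(11) assms(8) assms(10)]) (use assms(6,7) q in auto)
  qed
  moreover have "P Q \<subseteq> plans Scan J Combine Q"
    using sub_plans[OF assms(11) assms(8)] assms(9) by blast
  ultimately show ?thesis using assms(9) unfolding approx_pareto_set_def by blast
qed

end
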